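(* There is a linear-time property $\varphi$ (over a finite alphabet $\Sigma$) such that, for every bound $n\in\mathbb{N}$, every safety automaton $\mathcal{A}$ with $L(\mathcal{A})\subseteq\varphi$ and $L_n(L(\mathcal{A}))=L_n(\varphi)$ has at least $n$ states.
   Context: A linear-time property over $\Sigma$ is a set $\varphi\subseteq\Sigma^\omega$. A lasso of length $n$ is a pair $(u,v)$ with $u\in\Sigma^*$, $v\in\Sigma^+$, $|u\cdot v|=n$, inducing $u\cdot v^\omega$. For $\psi\subseteq\Sigma^\omega$, $L_n(\psi)=\{u\cdot v^\omega \in \psi \mid u\in\Sigma^*, v\in\Sigma^+, |u\cdot v|=n\}$. A (nondeterministic) safety automaton is $(Q,Q_0,\delta)$ with finite state set $Q$, initial states $Q_0\subseteq Q$, and $\delta:Q\times\Sigma\to\mathcal{P}(Q)$; it accepts an infinite word iff there is an infinite run $q_0q_1\cdots$ with $q_0\in Q_0$ and $q_{i+1}\in\delta(q_i,\alpha_{i+1})$ on it. $L(\mathcal{A})$ is the accepted language. *)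

theory Defs
  imports "HOL-Library.Omega_Words_Fun"
begin

definition omega_words :: "'a set \<Rightarrow> 'a word set" where
  "omega_words \<Sigma> = {w. \<forall>i. w i \<in> \<Sigma>}"

definition lassos_n :: "'a set \<Rightarrow> nat \<Rightarrow> 'a word set \<Rightarrow> 'a word set" where
  "lassos_n \<Sigma> n \<psi> = {w \<in> \<psi>. \<exists>u v. set u \<subseteq> \<Sigma> \<and> set v \<subseteq> \<Sigma> \<and> v \<noteq> [] \<and>
      length u + length v = n \<and> w = u \<frown> v\<^sup>\<omega>}"

(* A safety automaton (Q, Q0, delta) over Sigma; states are natural numbers
   (every finite state set is isomorphic to a finite set of naturals). *)
definition safety_automaton ::
  "'a set \<Rightarrow> nat set \<Rightarrow> nat set \<Rightarrow> (nat \<Rightarrow> 'a \<Rightarrow> nat set) \<Rightarrow> bool" where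
  "safety_automaton \<Sigma> Q Q0 \<delta> \<longleftrightarrow> finite Q \<and> Q0 \<subseteq> Q \<and>
      (\<forall>q\<in>Q. \<forall>a\<in>\<Sigma>. \<delta> q a \<subseteq> Q)"

definition sa_lang ::
  "'a set \<Rightarrow> nat set \<Rightarrow> (nat \<Rightarrow> 'a \<Rightarrow> nat set) \<Rightarrow> 'a word set" where
  "sa_lang \<Sigma> Q0 \<delta> = {w \<in> omega_words \<Sigma>. \<exists>r :: nat \<Rightarrow> nat.
      r 0 \<in> Q0 \<and> (\<forall>i. r (Suc i) \<in> \<delta> (r i) (w i))}"

end

theory Submission
  imports Defs
begin

definition stairw :: "nat \<Rightarrow> nat word" where
  "stairw k = (\<lambda>i. if i < k then 0 else 1)"

lemma stair_lasso: "replicate k (0::nat) \<frown> [1]\<^sup>\<omega> = stairw k"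
  by (rule ext) (simp add: conc_def stairw_def)

lemma run_in_Q:
  assumes "safety_automaton \<Sigma> Q Q0 \<delta>" "r 0 \<in> Q0" "\<forall>i. r (Suc i) \<in> \<delta> (r i) (w i)"
    "\<forall>i. w i \<in> \<Sigma>"
  shows "r t \<in> Q"
proof (induction t)
  case 0 then show ?case using assms unfolding safety_automaton_def by auto
next
  case (Suc t) then show ?case using assms unfolding safety_automaton_def by blast
qed

lemma main:
  assumes sa: "safety_automaton {0,1} Q Q0 \<delta>"
    and sub: "sa_lang {0,1} Q0 \<delta> \<subseteq> range stairw"
    and w: "stairw (n - 1) \<in> sa_lang {0,1} Q0 \<delta>"
  shows "n \<le> card Q"
proof -
  let ?w = "stairw (n - 1)"
  from w obtain r where r0: "r 0 \<in> Q0" and rs: "\<forall>i. r (Suc i) \<in> \<delta> (r i) (?w i)"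
    unfolding sa_lang_def by blast
  have wS: "\<forall>i. ?w i \<in> {0,1}" by (simp add: stairw_def)
  have inQ: "r ` {..<n} \<subseteq> Q" using run_in_Q[OF sa r0 rs wS] by blast
  have inj: "inj_on r {..<n}"
  proof (rule ccontr)
    assume "\<not> inj_on r {..<n}"
    then obtain i j where ij: "i < j" "j < n" "r i = r j"
      unfolding inj_on_def by (metis lessThan_iff nat_neq_iff)
    define p where "p = j - i"
    have p0: "0 < p" using ij p_def by simp
    define r' where "r' t = (if t < i then r t else r (i + (t - i) mod p))" for t
    have z: "(\<lambda>_. 0::nat) \<in> sa_lang {0,1} Q0 \<delta>"
      unfolding sa_lang_def omega_words_def
    proof (simp, intro exI conjI allI)
      show "r' 0 \<in> Q0" using r0 by (simp add: r'_def)
      fix t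
      show "r' (Suc t) \<in> \<delta> (r' t) 0"
      proof (cases "Suc t < i")
        case True
        then have "?w t = 0" using ij by (simp add: stairw_def)
        then show ?thesis using rs True by (metis Suc_lessD r'_def)
      next
        case F: False
        show ?thesis
        proof (cases "t < i")
          case True
          then have "t + 1 = i" using F by simp
          moreover have "?w t = 0" using True ij by (simp add: stairw_def)
          moreover have "r' t = r t" "r' (Suc t) = r (Suc t)" using True \<open>t + 1 = i\<close> by (simp_all add: r'_def)
          ultimately show ?thesis using rs[rule_format, of t] by simp
        next
          case False
          define s where "s = (t - i) mod p"
          have sp: "s < p" using p0 s_def by simp
          have rt: "r' t = r (i + s)" using False by (simp add: r'_def s_def)
          have w0: "?w (i + s) = 0" using sp ij p_def by (simp add: stairw_def)
          show ?thesis
          proof (cases "Suc s < p")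
            case True
            have "(Suc t - i) mod p = Suc s"
              using True False s_def by (metis Suc_diff_le mod_Suc not_less less_not_refl)
            then have "r' (Suc t) = r (Suc (i + s))" using False by (simp add: r'_def)
            then show ?thesis using rs[rule_format, of "i+s"] rt w0 by simp
          next
            case Fs: False
            then have sp1: "Suc s = p" using sp by simp
            have "(Suc t - i) mod p = 0"
              using sp1 False s_def by (metis Suc_diff_le mod_Suc not_less less_not_refl)
            then have "r' (Suc t) = r j" using False ij by (simp add: r'_def)
            moreover have "Suc (i + s) = j" using sp1 p_def ij by simp
            ultimately show ?thesis using rs[rule_format, of "i+s"] rt w0 by simp
          qed
        qed
      qed
    qed
    then obtain k where "(\<lambda>_. 0::nat) = stairw k" using sub by blast
    then have "(0::nat) = stairw k k" by metis
    then show False by (simp add: stairw_def)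
  qed
  have "finite Q" using sa unfolding safety_automaton_def by blast
  then have "card (r ` {..<n}) \<le> card Q" using inQ card_mono by blast
  then show ?thesis using card_image[OF inj] by simp
qed

theorem theorem4:
  shows "\<exists>(\<Sigma> :: nat set) \<phi>. finite \<Sigma> \<and> \<phi> \<subseteq> omega_words \<Sigma> \<and>
    (\<forall>n Q Q0 \<delta>. safety_automaton \<Sigma> Q Q0 \<delta> \<and> sa_lang \<Sigma> Q0 \<delta> \<subseteq> \<phi> \<and>
        lassos_n \<Sigma> n (sa_lang \<Sigma> Q0 \<delta>) = lassos_n \<Sigma> n \<phi>
      \<longrightarrow> card Q \<ge> n)"
proof (intro exI conjI allI impI)
  show "finite {0::nat,1}" by simp
  show "range stairw \<subseteq> omega_words {0,1}"
    by (auto simp: omega_words_def stairw_def split: if_splits)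
  fix n Q Q0 \<delta>
  assume A: "safety_automaton {0::nat,1} Q Q0 \<delta> \<and> sa_lang {0,1} Q0 \<delta> \<subseteq> range stairw \<and>
        lassos_n {0,1} n (sa_lang {0,1} Q0 \<delta>) = lassos_n {0,1} n (range stairw)"
  show "n \<le> card Q"
  proof (cases n)
    case 0 then show ?thesis by simp
  next
    case (Suc m)
    have "set (replicate m (0::nat)) \<subseteq> {0,1}" by auto
    have "stairw m \<in> lassos_n {0,1} n (range stairw)"
      unfolding lassos_n_def
      by (rule CollectI, rule conjI, simp,
          rule exI[of _ "replicate m 0"], rule exI[of _ "[1]"], use \<open>set (replicate m (0::nat)) \<subseteq> {0,1}\<close> in \<open>simp only: stair_lasso, simp add: Suc\<close>)
    then have "stairw m \<in> lassos_n {0,1} n (sa_lang {0,1} Q0 \<delta>)" using A by simp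
    then have "stairw (n - 1) \<in> sa_lang {0,1} Q0 \<delta>"
      using Suc unfolding lassos_n_def by simp
    then show ?thesis using main A by blast
  qed
qed

end
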